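(* Let $p>0$, let $f$ be a $p$-knowable Boolean function, and let $q>0$ with $pq>1$. Then for every integer $n\ge1$, $$\sum_{k>n}I_k(f)^q\le\mathbb E[(\max W(f))^p]^q\,\frac{n^{1-pq}}{pq-1}.$$ In particular, if $f$ is $p$-knowable for some $p>\tfrac12$, then $H(f)=\sum_k I_k(f)^2<\infty$.
   Context: Let $\Omega=\{-1,1\}$ and $\Omega^\infty=\{-1,1\}^{\mathbb N}$ with the uniform product probability measure; $\omega$ denotes a uniformly random element. A Boolean function is a measurable map $f:\Omega^\infty\to\Omega$. $\omega^{(k)}$ is $\omega$ with bit $k$ flipped; $I_k(f)=\mathbb P(f(\omega^{(k)})\ne f(\omega))$, $H(f)=\sum_kI_k(f)^2$. A set $W\subseteq\mathbb N$ is a witness set for $f$ at $\omega$ if there is an event $A$ with $\mathbb P(A)=1$ such that for all $\tilde\omega\in A$: if $\tilde\omega_i=\omega_i$ for all $i\in W$ then $f(\tilde\omega)=f(\omega)$. $f$ is finitary if almost surely a finite witness set exists; then $W(f)(\omega)$ denotes the least finite witness set in the order: smaller maximum first, then smaller cardinality, then lexicographic. $f$ is $p$-knowable if it is finitary and $\mathbb E[(\max W(f))^p]<\infty$. *)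

theory Defs
  imports "HOL-Probability.Probability"
begin

definition Omega :: "(nat \<Rightarrow> int) measure" where
  "Omega = PiM UNIV (\<lambda>_. measure_pmf (pmf_of_set {-1::int, 1}))"

definition boolean_function :: "((nat \<Rightarrow> int) \<Rightarrow> int) \<Rightarrow> bool" where
  "boolean_function f \<longleftrightarrow>
     f \<in> measurable Omega (count_space UNIV) \<and> (\<forall>w\<in>space Omega. f w \<in> {-1, 1})"

definition flip_bit :: "nat \<Rightarrow> (nat \<Rightarrow> int) \<Rightarrow> (nat \<Rightarrow> int)" where
  "flip_bit k w = w(k := - (w k))"

definition influence :: "((nat \<Rightarrow> int) \<Rightarrow> int) \<Rightarrow> nat \<Rightarrow> real" where
  "influence f k = measure Omega {w \<in> space Omega. f (flip_bit k w) \<noteq> f w}"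

definition total_sq_influence :: "((nat \<Rightarrow> int) \<Rightarrow> int) \<Rightarrow> real" where
  "total_sq_influence f = (\<Sum>k. (influence f k)\<^sup>2)"

definition witness_set :: "((nat \<Rightarrow> int) \<Rightarrow> int) \<Rightarrow> (nat \<Rightarrow> int) \<Rightarrow> nat set \<Rightarrow> bool" where
  "witness_set f w W \<longleftrightarrow>
     (\<exists>A\<in>sets Omega. measure Omega A = 1 \<and>
        (\<forall>w'\<in>A. (\<forall>i\<in>W. w' i = w i) \<longrightarrow> f w' = f w))"

definition finitary :: "((nat \<Rightarrow> int) \<Rightarrow> int) \<Rightarrow> bool" where
  "finitary f \<longleftrightarrow> (AE w in Omega. \<exists>W. finite W \<and> witness_set f w W)"

definition setmax :: "nat set \<Rightarrow> nat" where
  "setmax W = (if W = {} then 0 else Max W)"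

definition wit_less :: "nat set \<Rightarrow> nat set \<Rightarrow> bool" where
  "wit_less V W \<longleftrightarrow>
     setmax V < setmax W \<or>
     (setmax V = setmax W \<and>
       (card V < card W \<or>
        (card V = card W \<and>
          (sorted_list_of_set V, sorted_list_of_set W) \<in> lexord {(x, y). x < y})))"

definition least_witness :: "((nat \<Rightarrow> int) \<Rightarrow> int) \<Rightarrow> (nat \<Rightarrow> int) \<Rightarrow> nat set" where
  "least_witness f w =
     (THE W. finite W \<and> witness_set f w W \<and>
        (\<forall>V. finite V \<and> witness_set f w V \<and> V \<noteq> W \<longrightarrow> wit_less W V))"

definition max_witness :: "((nat \<Rightarrow> int) \<Rightarrow> int) \<Rightarrow> (nat \<Rightarrow> int) \<Rightarrow> nat" where
  "max_witness f w = setmax (least_witness f w)"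

definition expected_max_witness_pow :: "real \<Rightarrow> ((nat \<Rightarrow> int) \<Rightarrow> int) \<Rightarrow> ennreal" where
  "expected_max_witness_pow p f = (\<integral>\<^sup>+ w. ennreal (real (max_witness f w) powr p) \<partial>Omega)"

definition p_knowable :: "real \<Rightarrow> ((nat \<Rightarrow> int) \<Rightarrow> int) \<Rightarrow> bool" where
  "p_knowable p f \<longleftrightarrow> finitary f \<and> expected_max_witness_pow p f < \<infinity>"

end

theory Submission
  imports Defs
begin

abbreviation "P0 \<equiv> measure_pmf (pmf_of_set {-1::int, 1})"

lemma prob_Omega: "prob_space Omega"
  unfolding Omega_def by (intro prob_space_PiM) (simp add: prob_space_measure_pmf)

lemma space_Omega[simp]: "space Omega = UNIV"
  unfolding Omega_def by (simp add: space_PiM)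

lemma flip_meas[measurable]: "flip_bit k \<in> measurable Omega Omega"
  unfolding Omega_def flip_bit_def
  by (rule measurable_PiM_single') (auto)

lemma emeasure_neg: "emeasure P0 (uminus ` A) = emeasure P0 A"
proof -
  have "{-1::int,1} \<inter> uminus ` A = uminus ` ({-1,1} \<inter> A)" by force
  hence "card ({-1::int,1} \<inter> uminus ` A) = card ({-1,1} \<inter> A)"
    by (simp add: card_image)
  thus ?thesis by (simp add: emeasure_pmf_of_set)
qed

lemma flip_preserves: "distr Omega Omega (flip_bit k) = Omega"
proof -
  interpret product_prob_space "\<lambda>_. P0" UNIV
    by unfold_locales
  show ?thesis unfolding Omega_def
  proof (rule PiM_eq)
    fix J :: "nat set" and F :: "nat \<Rightarrow> int set" assume J: "finite J" 
    define F' where "F' j = (if j = k then uminus ` F j else F j)" for j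
    have "flip_bit k -` prod_emb UNIV (\<lambda>_. P0) J (Pi\<^sub>E J F) = prod_emb UNIV (\<lambda>_. P0) J (Pi\<^sub>E J F')"
      apply (auto simp: prod_emb_def space_PiM PiE_iff flip_bit_def F'_def image_iff)
      apply (metis minus_minus)
      apply (smt (verit) imageE minus_minus)+
      done
    then have "emeasure (distr (Pi\<^sub>M UNIV (\<lambda>_. P0)) (Pi\<^sub>M UNIV (\<lambda>_. P0)) (flip_bit k)) (prod_emb UNIV (\<lambda>_. P0) J (Pi\<^sub>E J F))
       = emeasure (Pi\<^sub>M UNIV (\<lambda>_. P0)) (prod_emb UNIV (\<lambda>_. P0) J (Pi\<^sub>E J F'))"
      using flip_meas[of k] unfolding Omega_def
      using J by (subst emeasure_distr) (auto simp: space_PiM intro!: sets_PiM_I)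
    also have "\<dots> = (\<Prod>j\<in>J. emeasure P0 (F' j))"
      using J by (subst emeasure_PiM_emb) auto
    also have "\<dots> = (\<Prod>j\<in>J. emeasure P0 (F j))"
      by (intro prod.cong) (simp_all add: F'_def emeasure_neg)
    finally show "emeasure (distr (Pi\<^sub>M UNIV (\<lambda>_. P0)) (Pi\<^sub>M UNIV (\<lambda>_. P0)) (flip_bit k)) (prod_emb UNIV (\<lambda>_. P0) J (Pi\<^sub>E J F))
       = (\<Prod>j\<in>J. emeasure P0 (F j))" .
  qed simp
qed

definition cyl :: "nat set \<Rightarrow> (nat \<Rightarrow> int) \<Rightarrow> (nat \<Rightarrow> int) set" where
  "cyl W g = {w. \<forall>i\<in>W. w i = g i}"

lemma cyl_sets: "finite W \<Longrightarrow> cyl W g \<in> sets Omega"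
proof -
  assume "finite W"
  have "{w \<in> space Omega. \<forall>i\<in>W. w i = g i} \<in> sets Omega"
    unfolding Omega_def using \<open>finite W\<close> by measurable
  then show ?thesis by (simp add: cyl_def)
qed

lemma per_index:
  assumes kW: "k \<notin> W" and fin: "finite W"
  shows "AE w in Omega. \<not> (w \<in> cyl W g \<and> witness_set f w W \<and> f (flip_bit k w) \<noteq> f w)"
proof -
  interpret prob_space Omega by (rule prob_Omega)
  have C: "cyl W g \<in> events" using cyl_sets[OF fin] .
  show ?thesis
  proof (cases "\<exists>w0\<in>cyl W g. witness_set f w0 W")
    case False then show ?thesis by auto
  next
    case True
    then obtain w0 A0 where w0: "w0 \<in> cyl W g" and A0: "A0 \<in> events" "prob A0 = 1"
      "\<And>w'. w' \<in> A0 \<Longrightarrow> (\<forall>i\<in>W. w' i = w0 i) \<Longrightarrow> f w' = f w0"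
      unfolding witness_set_def by blast
    show ?thesis
    proof (cases "cyl W g \<in> null_sets Omega")
      case True then show ?thesis using AE_not_in[OF True] by (auto elim: AE_mp)
    next
      case Cpos: False
      have "AE x in Omega. x \<in> A0" using AE_prob_1[OF A0(2)] .
      then have "AE x in distr Omega Omega (flip_bit k). x \<in> A0" unfolding flip_preserves .
      then have AEf: "AE w in Omega. flip_bit k w \<in> A0"
        using A0(1) by (subst (asm) AE_distr_iff) auto
      have nullc: "space Omega - B \<in> null_sets Omega" if "B \<in> events" "prob B = 1" for B
        using that prob_compl[of B] sets.compl_sets[OF that(1)] by (simp add: emeasure_eq_measure null_sets_def)
      show ?thesis using AEf
      proof (rule AE_mp, intro AE_I2 impI notI)
        fix w assume fA: "flip_bit k w \<in> A0" and
          H: "w \<in> cyl W g \<and> witness_set f w W \<and> f (flip_bit k w) \<noteq> f w"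
        then obtain A where A: "A \<in> events" "prob A = 1"
          "\<And>w'. w' \<in> A \<Longrightarrow> (\<forall>i\<in>W. w' i = w i) \<Longrightarrow> f w' = f w"
          unfolding witness_set_def by blast
        have "A \<inter> A0 \<inter> cyl W g \<noteq> {}"
        proof
          assume "A \<inter> A0 \<inter> cyl W g = {}"
          then have "cyl W g \<subseteq> (space Omega - A) \<union> (space Omega - A0)" by auto
          then have "cyl W g \<in> null_sets Omega"
            using null_sets_subset[OF null_sets.Un[OF nullc[OF A(1,2)] nullc[OF A0(1,2)]] C] by blast
          with Cpos show False by simp
        qed
        then obtain v where v: "v \<in> A" "v \<in> A0" "v \<in> cyl W g" by blast
        have "f v = f w" using A(3)[OF v(1)] v(3) H by (auto simp: cyl_def)
        moreover have "f v = f w0" using A0(3)[OF v(2)] v(3) w0 by (auto simp: cyl_def)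
        moreover have "f (flip_bit k w) = f w0" using A0(3)[OF fA] H w0 kW
          by (auto simp: cyl_def flip_bit_def)
        ultimately show False using H by simp
      qed
    qed
  qed
qed

abbreviation "LEXLT \<equiv> lexord {(x::nat, y). x < y}"

lemma lt_trans: "trans {(x::nat, y). x < y}" by (auto simp: trans_def)

lemma wit_less_irrefl: "\<not> wit_less V V"
  unfolding wit_less_def using lexord_irreflexive[of "{(x::nat, y). x < y}"] by auto

lemma wit_less_trans: "wit_less U V \<Longrightarrow> wit_less V W \<Longrightarrow> wit_less U W"
proof -
  assume a: "wit_less U V" "wit_less V W"
  have t: "(a, b) \<in> LEXLT \<Longrightarrow> (b, c) \<in> LEXLT \<Longrightarrow> (a, c) \<in> LEXLT" for a b c
    using lexord_trans[OF _ _ lt_trans] by blast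
  show ?thesis using a unfolding wit_less_def
    apply (elim disjE conjE)
    apply (simp_all)
    using t by auto
qed

lemma wit_less_total:
  assumes "finite V" "finite W" "V \<noteq> W" shows "wit_less V W \<or> wit_less W V"
proof -
  have "sorted_list_of_set V \<noteq> sorted_list_of_set W"
    using assms by (metis sorted_list_of_set.set_sorted_key_list_of_set)
  then have "(sorted_list_of_set V, sorted_list_of_set W) \<in> LEXLT \<or> (sorted_list_of_set W, sorted_list_of_set V) \<in> LEXLT"
  proof -
    have lin: "\<forall>a b. (a,b) \<in> {(x::nat,y). x<y} \<or> a=b \<or> (b,a) \<in> {(x::nat,y). x<y}" by auto
    show ?thesis using lexord_linear[OF lin, of "sorted_list_of_set V" "sorted_list_of_set W"] \<open>sorted_list_of_set V \<noteq> sorted_list_of_set W\<close> by blast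
  qed
  moreover have "length (sorted_list_of_set V) = card V" "length (sorted_list_of_set W) = card W" by simp_all
  ultimately show ?thesis unfolding wit_less_def
    by (cases "setmax V < setmax W"; cases "setmax W < setmax V"; cases "card V < card W"; cases "card W < card V") auto
qed

lemma setmax_sub: "W \<subseteq> {0..setmax W}" if "finite W"
  using that by (auto simp: setmax_def)

lemma least_witness_props:
  assumes ex: "\<exists>W. finite W \<and> witness_set f w W"
  shows "finite (least_witness f w) \<and> witness_set f w (least_witness f w)"
proof -
  define S where "S = {W. finite W \<and> witness_set f w W}"
  define m where "m = (LEAST m. \<exists>W\<in>S. setmax W = m)"
  have m1: "\<exists>W\<in>S. setmax W = m" unfolding m_def
    by (rule LeastI_ex) (use ex S_def in auto)
  have m2: "m \<le> setmax W" if "W \<in> S" for W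
    unfolding m_def by (rule Least_le) (use that in auto)
  define Sm where "Sm = {W\<in>S. setmax W = m}"
  have finSm: "finite Sm"
  proof (rule finite_subset)
    show "Sm \<subseteq> Pow {0..m}" using setmax_sub by (auto simp: Sm_def S_def)
  qed simp
  define R where "R = {(V, W). V \<in> Sm \<and> W \<in> Sm \<and> wit_less V W}"
  have finR: "finite R" by (rule finite_subset[of _ "Sm \<times> Sm"]) (auto simp: R_def finSm)
  have transR: "trans R"
  proof (rule transI)
    fix x y z assume "(x, y) \<in> R" "(y, z) \<in> R"
    then have "x \<in> Sm" "z \<in> Sm" "wit_less x y" "wit_less y z" unfolding R_def by auto
    then show "(x, z) \<in> R" unfolding R_def using wit_less_trans[of x y z] by simp
  qed
  have "irrefl R" unfolding irrefl_def R_def using wit_less_irrefl by auto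
  then have "acyclic R" unfolding acyclic_irrefl trancl_id[OF transR] .
  then have wfR: "wf R" using finR by (rule finite_acyclic_wf[rotated])
  have "Sm \<noteq> {}" using m1 unfolding Sm_def by auto
  then obtain W00 where "W00 \<in> Sm" by blast
  obtain W0 where W0: "W0 \<in> Sm" "\<And>V. (V, W0) \<in> R \<Longrightarrow> V \<notin> Sm"
    by (rule wfE_min[OF wfR \<open>W00 \<in> Sm\<close>]) blast
  define P where "P W \<longleftrightarrow> finite W \<and> witness_set f w W \<and>
        (\<forall>V. finite V \<and> witness_set f w V \<and> V \<noteq> W \<longrightarrow> wit_less W V)" for W
  have PW0: "P W0"
    unfolding P_def
  proof (intro conjI allI impI)
    show "finite W0" "witness_set f w W0" using W0 by (auto simp: Sm_def S_def)
    fix V assume V: "finite V \<and> witness_set f w V \<and> V \<noteq> W0"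
    then have "V \<in> S" by (simp add: S_def)
    then consider "setmax V > m" | "V \<in> Sm"
      using m2[of V] unfolding Sm_def by (cases "setmax V = m") auto
    then show "wit_less W0 V"
    proof cases
      case 1
      have "setmax W0 = m" using W0(1) unfolding Sm_def by blast
      then show ?thesis using 1 unfolding wit_less_def by simp
    next
      case 2
      have "(V, W0) \<notin> R" using W0(2) 2 by blast
      then have "\<not> wit_less V W0" using 2 W0(1) unfolding R_def by blast
      with wit_less_total[of W0 V] V \<open>finite W0\<close> show ?thesis by auto
    qed
  qed
  have uniq: "W1 = W0" if "P W1" for W1
  proof (rule ccontr)
    assume ne: "W1 \<noteq> W0"
    have a: "wit_less W1 W0" using that PW0 ne unfolding P_def by blast
    have b: "wit_less W0 W1" using that PW0 ne unfolding P_def by blast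
    show False using wit_less_trans[OF a b] wit_less_irrefl by blast
  qed
  have "least_witness f w = (THE W. P W)" unfolding least_witness_def P_def by simp
  also have "\<dots> = W0" by (rule the_equality[of P W0, OF PW0 uniq])
  finally show ?thesis using PW0 unfolding P_def by simp
qed


lemma bad_AE:
  assumes fin: "finitary f"
  shows "AE w in Omega. f (flip_bit k w) \<noteq> f w \<longrightarrow> k \<le> max_witness f w"
proof -
  define I where "I = (SIGMA W:{W. finite W \<and> k \<notin> W}. PiE W (\<lambda>_. UNIV::int set))"
  have cI: "countable I" unfolding I_def
  proof (rule countable_SIGMA)
    show "countable {W. finite W \<and> k \<notin> W}"
      by (rule countable_subset[OF _ countable_Collect_finite]) auto
  qed (auto intro: countable_PiE)
  have "AE w in Omega. \<forall>x\<in>I. \<not> (w \<in> cyl (fst x) (snd x) \<and> witness_set f w (fst x) \<and> f (flip_bit k w) \<noteq> f w)"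
    using cI
  proof (subst AE_ball_countable, simp, intro ballI)
    fix x assume "x \<in> I"
    then show "AE w in Omega. \<not> (w \<in> cyl (fst x) (snd x) \<and> witness_set f w (fst x) \<and> f (flip_bit k w) \<noteq> f w)"
      by (intro per_index) (auto simp: I_def)
  qed
  moreover have "AE w in Omega. \<exists>W. finite W \<and> witness_set f w W" using fin by (simp add: finitary_def)
  ultimately show ?thesis
  proof eventually_elim
    case (elim w)
    define W0 where "W0 = least_witness f w"
    have W0: "finite W0" "witness_set f w W0" using least_witness_props[OF elim(2)] W0_def by auto
    show ?case
    proof
      assume ne: "f (flip_bit k w) \<noteq> f w"
      show "k \<le> max_witness f w"
      proof (cases "k \<in> W0")
        case True
        then show ?thesis using W0(1) by (auto simp: max_witness_def W0_def[symmetric] setmax_def)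
      next
        case False
        then have "(W0, restrict w W0) \<in> I" using W0 by (auto simp: I_def)
        moreover have "w \<in> cyl W0 (restrict w W0)" by (simp add: cyl_def)
        ultimately show ?thesis using elim(1) W0 ne by fastforce
      qed
    qed
  qed
qed

lemma infl_set: assumes bf: "boolean_function f"
  shows "{w \<in> space Omega. f (flip_bit k w) \<noteq> f w} \<in> sets Omega"
proof -
  have f[measurable]: "f \<in> measurable Omega (count_space UNIV)" using bf by (simp add: boolean_function_def)
  have [measurable]: "flip_bit k \<in> measurable Omega Omega" by (rule flip_meas)
  have "{w \<in> space Omega. f (flip_bit k w) \<noteq> f w} = (\<Union>a. {w \<in> space Omega. f w = a} \<inter> {w \<in> space Omega. f (flip_bit k w) \<noteq> a})"
    by auto
  also have "\<dots> \<in> sets Omega" by measurable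
  finally show ?thesis .
qed

lemma infl_bound:
  assumes bf: "boolean_function f" and pk: "p_knowable p f" and p: "p > 0"
  shows "real k powr p * influence f k \<le> enn2real (expected_max_witness_pow p f)"
proof -
  interpret prob_space Omega by (rule prob_Omega)
  define E where "E = {w \<in> space Omega. f (flip_bit k w) \<noteq> f w}"
  have E: "E \<in> events" unfolding E_def by (rule infl_set[OF bf])
  have fin: "finitary f" and lt: "expected_max_witness_pow p f < \<infinity>" using pk by (auto simp: p_knowable_def)
  have "ennreal (real k powr p) * emeasure Omega E = (\<integral>\<^sup>+ w. ennreal (real k powr p) * indicator E w \<partial>Omega)"
    using E by (simp add: nn_integral_cmult_indicator)
  also have "\<dots> \<le> expected_max_witness_pow p f"
    unfolding expected_max_witness_pow_def
  proof (rule nn_integral_mono_AE)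
    show "AE w in Omega. ennreal (real k powr p) * indicator E w \<le> ennreal (real (max_witness f w) powr p)"
      using bad_AE[OF fin, of k]
    proof eventually_elim
      case (elim w)
      show ?case
      proof (cases "w \<in> E")
        case True
        then have "k \<le> max_witness f w" using elim by (auto simp: E_def)
        then have "real k powr p \<le> real (max_witness f w) powr p" using p by (intro powr_mono2) auto
        then show ?thesis using True by (simp add: indicator_def)
      qed (simp add: indicator_def)
    qed
  qed
  finally have "ennreal (real k powr p * influence f k) \<le> expected_max_witness_pow p f"
    by (simp add: influence_def E_def emeasure_eq_measure ennreal_mult)
  then have "enn2real (ennreal (real k powr p * influence f k)) \<le> enn2real (expected_max_witness_pow p f)"
    using lt by (intro enn2real_mono) auto
  then show ?thesis by (simp add: influence_def)
qed


lemma mvt_step: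
  fixes y s :: real assumes y: "y \<ge> 1" and s: "s > 1"
  shows "(y + 1) powr (-s) \<le> y powr (1 - s) / (s - 1) - (y + 1) powr (1 - s) / (s - 1)"
proof -
  have "\<exists>z. y < z \<and> z < y + 1 \<and> (y + 1) powr (1 - s) - y powr (1 - s) = (y + 1 - y) * ((1 - s) * z powr (1 - s - 1))"
  proof (intro MVT2)
    fix x assume "y \<le> x" "x \<le> y + 1"
    then have "x > 0" using y by simp
    then show "((\<lambda>t. t powr (1 - s)) has_real_derivative (1 - s) * x powr (1 - s - 1)) (at x)"
      by (rule has_real_derivative_powr)
  qed simp
  then obtain z where z: "y < z" "z < y + 1" "(y + 1) powr (1 - s) - y powr (1 - s) = (1 - s) * z powr (-s)"
    by auto
  have "(y + 1) powr (-s) \<le> z powr (-s)" using z y s by (intro powr_mono2') auto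
  also have "z powr (-s) = (y powr (1 - s) - (y + 1) powr (1 - s)) / (s - 1)"
    using z(3) s by (simp add: field_simps)
  finally show ?thesis by (simp add: diff_divide_distrib)
qed

lemma series_bound:
  fixes a :: "nat \<Rightarrow> real" and e p q :: real and n :: nat
  assumes a0: "\<And>k. a k \<ge> 0" and ab: "\<And>k. k \<ge> 1 \<Longrightarrow> real k powr p * a k \<le> e"
    and p: "p > 0" and q: "q > 0" and pq: "p * q > 1" and n: "n \<ge> 1"
  shows "summable (\<lambda>j. a (n + 1 + j) powr q) \<and>
         (\<Sum>j. a (n + 1 + j) powr q) \<le> e powr q * (real n powr (1 - p * q) / (p * q - 1))"
proof -
  define s where "s = p * q"
  have s: "s > 1" using pq s_def by simp
  define b where "b j = real (n + j) powr (1 - s) / (s - 1)" for j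
  have e0: "e \<ge> 0" using ab[of 1] a0[of 1] by simp
  have t1: "a (n + 1 + j) powr q \<le> e powr q * (b j - b (Suc j))" for j
  proof -
    define x where "x = real (n + 1 + j)"
    have x: "x \<ge> 1" using x_def by simp
    have "a (n + 1 + j) = (x powr p * a (n + 1 + j)) * x powr (-p)"
      using x by (simp add: powr_minus field_simps)
    also have "\<dots> \<le> e * x powr (-p)"
      using ab[of "n+1+j"] x_def by (intro mult_right_mono) auto
    finally have "a (n + 1 + j) powr q \<le> (e * x powr (-p)) powr q"
      using a0 q by (intro powr_mono2) auto
    also have "\<dots> = e powr q * x powr (-s)"
      by (simp add: powr_mult powr_powr s_def)
    also have "x powr (-s) \<le> b j - b (Suc j)"
      using mvt_step[of "real (n + j)" s] n s x_def unfolding b_def by (simp add: add_ac)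
    then have "e powr q * x powr (-s) \<le> e powr q * (b j - b (Suc j))"
      by (intro mult_left_mono) auto
    finally show ?thesis .
  qed
  have "(\<lambda>j. real (n + j)) = (\<lambda>j. real n + real j)" by simp
  have lim: "(\<lambda>j. real (n + j)) \<longlonglongrightarrow> 0 \<or> True" by simp
  have bl: "b \<longlonglongrightarrow> 0"
  proof -
    have "filterlim (\<lambda>j. real (n + j)) at_top sequentially"
      by (rule filterlim_subseq[THEN filterlim_compose[OF filterlim_real_sequentially]]) (auto simp: strict_mono_def)
    then have "(\<lambda>j. real (n + j) powr (1 - s)) \<longlonglongrightarrow> 0"
      using s by (intro tendsto_neg_powr) auto
    then show ?thesis unfolding b_def by (intro tendsto_divide_zero)
  qed
  have sums: "(\<lambda>j. e powr q * (b j - b (Suc j))) sums (e powr q * (b 0 - 0))"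
    by (intro sums_mult telescope_sums' bl)
  have sum1: "summable (\<lambda>j. a (n + 1 + j) powr q)"
  proof (rule summable_comparison_test')
    show "summable (\<lambda>j. e powr q * (b j - b (Suc j)))" using sums by (rule sums_summable)
    show "norm (a (n + 1 + j) powr q) \<le> e powr q * (b j - b (Suc j))" for j
      using t1[of j] by simp
  qed
  have "(\<Sum>j. a (n + 1 + j) powr q) \<le> (\<Sum>j. e powr q * (b j - b (Suc j)))"
    using t1 sum1 sums_summable[OF sums] by (intro suminf_le) auto
  also have "\<dots> = e powr q * (real n powr (1 - p * q) / (p * q - 1))"
    using sums_unique[OF sums] by (simp add: b_def s_def)
  finally show ?thesis using sum1 by simp
qed


theorem mainTheorem12:
  fixes p q :: real and f :: "(nat \<Rightarrow> int) \<Rightarrow> int"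
  assumes "p > 0" and "boolean_function f" and "p_knowable p f"
    and "q > 0" and "p * q > 1"
  shows "(\<forall>n::nat. n \<ge> 1 \<longrightarrow>
            summable (\<lambda>k. influence f (n + 1 + k) powr q) \<and>
            (\<Sum>k. influence f (n + 1 + k) powr q)
              \<le> enn2real (expected_max_witness_pow p f) powr q
                 * (real n powr (1 - p * q) / (p * q - 1)))
         \<and> (p > 1/2 \<longrightarrow> summable (\<lambda>k. (influence f k)\<^sup>2))"
proof -
  have a0: "\<And>k. influence f k \<ge> 0" by (simp add: influence_def)
  have ab: "\<And>k. k \<ge> 1 \<Longrightarrow> real k powr p * influence f k \<le> enn2real (expected_max_witness_pow p f)"
    using infl_bound[OF assms(2,3,1)] by blast
  have gen: "\<And>q n. q > 0 \<Longrightarrow> p * q > 1 \<Longrightarrow> n \<ge> 1 \<Longrightarrow>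
      summable (\<lambda>j. influence f (n + 1 + j) powr q) \<and>
      (\<Sum>j. influence f (n + 1 + j) powr q) \<le> enn2real (expected_max_witness_pow p f) powr q * (real n powr (1 - p * q) / (p * q - 1))"
    by (rule series_bound[OF a0 ab assms(1)])
  have part2: "summable (\<lambda>k. (influence f k)\<^sup>2)" if "p > 1/2"
  proof -
    have h: "p * 2 > 1" using that by simp
    have "summable (\<lambda>j. influence f (1 + 1 + j) powr 2)"
      using gen[of 2 1, OF _ h] by simp
    then have "summable (\<lambda>j. (influence f (j + 2))\<^sup>2)"
      using a0 by (simp add: add.commute)
    then show ?thesis by (rule iffD1[OF summable_iff_shift])
  qed
  show ?thesis
  proof (rule conjI; intro allI impI)
    fix n :: nat assume "n \<ge> 1"
    then show "summable (\<lambda>k. influence f (n + 1 + k) powr q) \<and>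
            (\<Sum>k. influence f (n + 1 + k) powr q)
              \<le> enn2real (expected_max_witness_pow p f) powr q
                 * (real n powr (1 - p * q) / (p * q - 1))"
      by (rule gen[OF assms(4,5)])
  next
    assume "p > 1/2" then show "summable (\<lambda>k. (influence f k)\<^sup>2)" by (rule part2)
  qed
qed

end
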